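(* Let $\operatorname{T}_2=\{x_1,x_2\}$ be the trivial quandle with two elements. Then $\operatorname{Aut}(\mathbb{Z}[\operatorname{T}_2])\cong\mathbb{Z}\rtimes\mathbb{Z}_2$.
   Context: A trivial quandle is a set $\operatorname{T}$ with operation $xy=x$ for all $x,y$. The quandle ring $\mathbb{Z}[\operatorname{T}]$ is the free abelian group with basis $\operatorname{T}$, with multiplication $\big(\sum_i\alpha_i x_i\big)\big(\sum_j\beta_j x_j\big)=\sum_{i,j}\alpha_i\beta_j (x_ix_j)$. $\operatorname{Aut}(\mathbb{Z}[\operatorname{T}])$ denotes the group of ring automorphisms of $\mathbb{Z}[\operatorname{T}]$ (bijective additive maps preserving the multiplication). *)

theory Defs
  imports "HOL-Algebra.Bij" "HOL-Algebra.Elementary_Groups"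
begin

text \<open>Since T is finite here, the free abelian group Z[T] with basis T is
  the set of all integer-valued functions supported in T.\<close>

definition trivial_quandle_op :: "'a \<Rightarrow> 'a \<Rightarrow> 'a" where
  "trivial_quandle_op x y = x"

definition quandle_ring :: "'a set \<Rightarrow> ('a \<Rightarrow> int) set" where
  "quandle_ring T = {\<alpha>. \<forall>z. z \<notin> T \<longrightarrow> \<alpha> z = 0}"

definition qr_add :: "('a \<Rightarrow> int) \<Rightarrow> ('a \<Rightarrow> int) \<Rightarrow> ('a \<Rightarrow> int)" where
  "qr_add \<alpha> \<beta> = (\<lambda>z. \<alpha> z + \<beta> z)"

text \<open>(sum_i a_i x_i)(sum_j b_j x_j) = sum_{i,j} a_i b_j (x_i x_j)\<close>
definition qr_mult :: "'a set \<Rightarrow> ('a \<Rightarrow> 'a \<Rightarrow> 'a) \<Rightarrow> ('a \<Rightarrow> int) \<Rightarrow> ('a \<Rightarrow> int) \<Rightarrow> ('a \<Rightarrow> int)" where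
  "qr_mult T op \<alpha> \<beta> =
     (\<lambda>z. \<Sum>x\<in>T. \<Sum>y\<in>T. if op x y = z then \<alpha> x * \<beta> y else 0)"

text \<open>Ring automorphisms: bijective additive maps preserving the multiplication
  (taken extensional, as in the library's Bij, so that they form a group
  under composition).\<close>
definition qr_ring_auts :: "'a set \<Rightarrow> ('a \<Rightarrow> 'a \<Rightarrow> 'a) \<Rightarrow> (('a \<Rightarrow> int) \<Rightarrow> ('a \<Rightarrow> int)) set" where
  "qr_ring_auts T op = {f \<in> Bij (quandle_ring T).
      (\<forall>\<alpha>\<in>quandle_ring T. \<forall>\<beta>\<in>quandle_ring T. f (qr_add \<alpha> \<beta>) = qr_add (f \<alpha>) (f \<beta>)) \<and>
      (\<forall>\<alpha>\<in>quandle_ring T. \<forall>\<beta>\<in>quandle_ring T. f (qr_mult T op \<alpha> \<beta>) = qr_mult T op (f \<alpha>) (f \<beta>))}"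

definition qr_Aut :: "'a set \<Rightarrow> ('a \<Rightarrow> 'a \<Rightarrow> 'a) \<Rightarrow> (('a \<Rightarrow> int) \<Rightarrow> ('a \<Rightarrow> int)) monoid" where
  "qr_Aut T op = BijGroup (quandle_ring T) \<lparr>carrier := qr_ring_auts T op\<rparr>"

definition semidirect_product ::
  "('n, 'x) monoid_scheme \<Rightarrow> ('h, 'y) monoid_scheme \<Rightarrow> ('h \<Rightarrow> 'n \<Rightarrow> 'n) \<Rightarrow> ('n \<times> 'h) monoid" where
  "semidirect_product N H \<phi> =
     \<lparr>carrier = carrier N \<times> carrier H,
      mult = (\<lambda>(n1, h1) (n2, h2). (n1 \<otimes>\<^bsub>N\<^esub> \<phi> h1 n2, h1 \<otimes>\<^bsub>H\<^esub> h2)),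
      one = (\<one>\<^bsub>N\<^esub>, \<one>\<^bsub>H\<^esub>)\<rparr>"

definition Z_rtimes_Z2 :: "(int \<times> int) monoid" where
  "Z_rtimes_Z2 = semidirect_product integer_group (integer_mod_group 2)
      (\<lambda>h. \<lambda>n\<in>carrier integer_group. if h = 0 then n else - n)"

end

theory Submission
  imports Defs
begin

abbreviation "SS \<equiv> quandle_ring {1, 2 :: nat}"

definition vec :: "int \<Rightarrow> int \<Rightarrow> nat \<Rightarrow> int" where
  "vec p q = (\<lambda>z. if z = 1 then p else if z = 2 then q else 0)"

lemma vec_in: "vec p q \<in> SS"
  by (simp add: vec_def quandle_ring_def)

lemma vec_in' [simp]: "vec p q \<in> quandle_ring {Suc 0, 2}"
  using vec_in by simp

lemma vec_1 [simp]: "vec p q 1 = p"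
  by (auto simp: vec_def)

lemma vec_1' [simp]: "vec p q (Suc 0) = p"
  by (auto simp: vec_def)

lemma vec_2 [simp]: "vec p q 2 = q"
  by (auto simp: vec_def)

lemma S_eq: "\<alpha> \<in> SS \<Longrightarrow> \<alpha> = vec (\<alpha> 1) (\<alpha> 2)"
  by (rule ext) (auto simp: vec_def quandle_ring_def)

lemma S_eq': "\<alpha> \<in> quandle_ring {Suc 0, 2} \<Longrightarrow> vec (\<alpha> (Suc 0)) (\<alpha> 2) = \<alpha>"
  using S_eq by simp

lemma vec_eq_iff: "vec p q = vec p' q' \<longleftrightarrow> p = p' \<and> q = q'"
  by (metis vec_1 vec_2)


lemma add_vec: "qr_add (vec p q) (vec p' q') = vec (p+p') (q+q')"
  by (rule ext) (simp add: qr_add_def vec_def)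

lemma mult_vec: "qr_mult {1,2} trivial_quandle_op (vec p q) (vec p' q') = vec (p*(p'+q')) (q*(p'+q'))"
  by (rule ext) (simp add: qr_mult_def vec_def trivial_quandle_op_def algebra_simps)

definition mat :: "int \<Rightarrow> int \<Rightarrow> int \<Rightarrow> int \<Rightarrow> (nat \<Rightarrow> int) \<Rightarrow> (nat \<Rightarrow> int)" where
  "mat a b c d = (\<lambda>\<alpha>\<in>SS. vec (a*\<alpha> 1 + b*\<alpha> 2) (c*\<alpha> 1 + d*\<alpha> 2))"

lemma mat_vec: "mat a b c d (vec p q) = vec (a*p+b*q) (c*p+d*q)"
  by (simp add: mat_def vec_in)

lemma mat_in: "\<alpha> \<in> SS \<Longrightarrow> mat a b c d \<alpha> \<in> SS"
  by (simp add: mat_def vec_in)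

lemma mat_in' [simp]: "\<alpha> \<in> quandle_ring {Suc 0, 2} \<Longrightarrow> mat a b c d \<alpha> \<in> quandle_ring {Suc 0, 2}"
  using mat_in by simp

lemma mat_compose:
  "compose SS (mat a b c d) (mat a' b' c' d') =
     mat (a*a'+b*c') (a*b'+b*d') (c*a'+d*c') (c*b'+d*d')"
proof (rule ext)
  fix \<alpha> :: "nat \<Rightarrow> int"
  show "compose SS (mat a b c d) (mat a' b' c' d') \<alpha> = mat (a*a'+b*c') (a*b'+b*d') (c*a'+d*c') (c*b'+d*d') \<alpha>"
  proof (cases "\<alpha> \<in> SS")
    case True
    then have "\<alpha> = vec (\<alpha> 1) (\<alpha> 2)" by (rule S_eq)
    then show ?thesis using True
      by (simp add: compose_def mat_def vec_in vec_eq_iff algebra_simps)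
  next
    case False
    then show ?thesis by (simp add: compose_def mat_def)
  qed
qed

lemma mat_id: "mat 1 0 0 1 = (\<lambda>\<alpha>\<in>SS. \<alpha>)"
  by (rule ext) (simp add: mat_def S_eq')

lemma mat_eq: "mat a b c d = mat a' b' c' d' \<Longrightarrow> a = a' \<and> b = b' \<and> c = c' \<and> d = d'"
proof -
  assume h: "mat a b c d = mat a' b' c' d'"
  have 1: "mat a b c d (vec 1 0) = mat a' b' c' d' (vec 1 0)" using h by simp
  have 2: "mat a b c d (vec 0 1) = mat a' b' c' d' (vec 0 1)" using h by simp
  show ?thesis using 1 2 by (simp add: mat_vec vec_eq_iff)
qed

lemma inv_alg:
  fixes a b c d e p q :: int
  assumes "a*d - b*c = e" "e*e = 1"
  shows "e*d*(a*p+b*q) + -e*b*(c*p+d*q) = p" "-e*c*(a*p+b*q) + e*a*(c*p+d*q) = q"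
        "a*(e*d*p + -e*b*q) + b*(-e*c*p + e*a*q) = p" "c*(e*d*p + -e*b*q) + d*(-e*c*p + e*a*q) = q"
proof -
  have "e*d*(a*p+b*q) + -e*b*(c*p+d*q) = e*(a*d-b*c)*p" by (simp add: algebra_simps)
  then show "e*d*(a*p+b*q) + -e*b*(c*p+d*q) = p" using assms by simp
  have "-e*c*(a*p+b*q) + e*a*(c*p+d*q) = e*(a*d-b*c)*q" by (simp add: algebra_simps)
  then show "-e*c*(a*p+b*q) + e*a*(c*p+d*q) = q" using assms by simp
  have "a*(e*d*p + -e*b*q) + b*(-e*c*p + e*a*q) = e*(a*d-b*c)*p" by (simp add: algebra_simps)
  then show "a*(e*d*p + -e*b*q) + b*(-e*c*p + e*a*q) = p" using assms by simp
  have "c*(e*d*p + -e*b*q) + d*(-e*c*p + e*a*q) = e*(a*d-b*c)*q" by (simp add: algebra_simps)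
  then show "c*(e*d*p + -e*b*q) + d*(-e*c*p + e*a*q) = q" using assms by simp
qed

lemma mat_Bij:
  assumes "a*d - b*c = e" "e*e = 1"
  shows "mat a b c d \<in> Bij SS"
proof -
  have ext: "mat a b c d \<in> extensional SS" by (simp add: mat_def)
  have "bij_betw (mat a b c d) SS SS"
  proof (rule bij_betw_byWitness[where f'="mat (e*d) (-e*b) (-e*c) (e*a)"])
    show "\<forall>x\<in>SS. mat (e*d) (-e*b) (-e*c) (e*a) (mat a b c d x) = x"
    proof
      fix x assume x: "x \<in> SS"
      have "mat (e*d) (-e*b) (-e*c) (e*a) (mat a b c d (vec (x 1) (x 2))) = vec (x 1) (x 2)"
        unfolding mat_vec vec_eq_iff using inv_alg[OF assms] by simp
      then show "mat (e*d) (-e*b) (-e*c) (e*a) (mat a b c d x) = x" using S_eq[OF x] by simp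
    qed
    show "\<forall>x\<in>SS. mat a b c d (mat (e*d) (-e*b) (-e*c) (e*a) x) = x"
    proof
      fix x assume x: "x \<in> SS"
      have "mat a b c d (mat (e*d) (-e*b) (-e*c) (e*a) (vec (x 1) (x 2))) = vec (x 1) (x 2)"
        unfolding mat_vec vec_eq_iff using inv_alg[OF assms] by simp
      then show "mat a b c d (mat (e*d) (-e*b) (-e*c) (e*a) x) = x" using S_eq[OF x] by simp
    qed
  qed (auto simp: mat_in)
  then show ?thesis using ext by (simp add: Bij_def)
qed

abbreviation "AUT \<equiv> qr_ring_auts {1, 2 :: nat} trivial_quandle_op"

lemma mat_aut:
  assumes "a + c = 1" "b + d = 1" "a*d - b*c = e" "e*e = 1"
  shows "mat a b c d \<in> AUT"
proof -
  have B: "mat a b c d \<in> Bij SS" using mat_Bij[OF assms(3,4)] .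
  have A: "mat a b c d (qr_add \<alpha> \<beta>) = qr_add (mat a b c d \<alpha>) (mat a b c d \<beta>)"
    if "\<alpha> \<in> SS" "\<beta> \<in> SS" for \<alpha> \<beta>
  proof -
    have "mat a b c d (qr_add (vec (\<alpha> 1) (\<alpha> 2)) (vec (\<beta> 1) (\<beta> 2))) =
      qr_add (mat a b c d (vec (\<alpha> 1) (\<alpha> 2))) (mat a b c d (vec (\<beta> 1) (\<beta> 2)))"
      unfolding add_vec mat_vec vec_eq_iff by (simp add: algebra_simps)
    then show ?thesis using S_eq[OF that(1)] S_eq[OF that(2)] by simp
  qed
  have M: "mat a b c d (qr_mult {1,2} trivial_quandle_op \<alpha> \<beta>) =
      qr_mult {1,2} trivial_quandle_op (mat a b c d \<alpha>) (mat a b c d \<beta>)"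
    if "\<alpha> \<in> SS" "\<beta> \<in> SS" for \<alpha> \<beta>
  proof -
    have e1: "(a*\<beta> 1+b*\<beta> 2) + (c*\<beta> 1+d*\<beta> 2) = \<beta> 1 + \<beta> 2"
    proof -
      have "(a*\<beta> 1+b*\<beta> 2) + (c*\<beta> 1+d*\<beta> 2) = (a+c)*\<beta> 1 + (b+d)*\<beta> 2"
        by (simp add: algebra_simps)
      then show ?thesis using assms by simp
    qed
    have "mat a b c d (qr_mult {1,2} trivial_quandle_op (vec (\<alpha> 1) (\<alpha> 2)) (vec (\<beta> 1) (\<beta> 2))) =
      qr_mult {1,2} trivial_quandle_op (mat a b c d (vec (\<alpha> 1) (\<alpha> 2))) (mat a b c d (vec (\<beta> 1) (\<beta> 2)))"
      unfolding mult_vec mat_vec vec_eq_iff e1 by (simp add: algebra_simps)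
    then show ?thesis using S_eq[OF that(1)] S_eq[OF that(2)] by simp
  qed
  show ?thesis unfolding qr_ring_auts_def using A M B by blast
qed

lemma hom_int:
  fixes h :: "int \<Rightarrow> int"
  assumes "\<And>x y. h (x + y) = h x + h y"
  shows "h x = x * h 1"
proof -
  have h0: "h 0 = 0" using assms[of 0 0] by simp
  have nat: "h (int n) = int n * h 1" for n
  proof (induction n)
    case 0 then show ?case using h0 by simp
  next
    case (Suc n)
    have "h (int (Suc n)) = h (int n + 1)" by (metis add.commute of_nat_Suc)
    also have "\<dots> = h (int n) + h 1" by (rule assms)
    finally show ?case using Suc by (simp add: algebra_simps)
  qed
  show ?thesis
  proof (cases "x \<ge> 0")
    case True
    define n where "n = nat x"
    have "x = int n" using True n_def by simp
    then show ?thesis using nat by simp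
  next
    case False
    define n where "n = nat (-x)"
    have n: "x = - int n" using False n_def by simp
    have "h (- int n) + h (int n) = 0" using assms[of "- int n" "int n"] h0 by simp
    then show ?thesis using nat n by (simp add: algebra_simps)
  qed
qed

lemma aut_char:
  assumes f: "f \<in> AUT"
  shows "\<exists>a b c d e. f = mat a b c d \<and> a + c = 1 \<and> b + d = 1 \<and> a*d - b*c = e \<and> e*e = 1"
proof -
  have fB: "f \<in> Bij SS" and
    fA: "\<And>\<alpha> \<beta>. \<alpha> \<in> SS \<Longrightarrow> \<beta> \<in> SS \<Longrightarrow> f (qr_add \<alpha> \<beta>) = qr_add (f \<alpha>) (f \<beta>)" and
    fM: "\<And>\<alpha> \<beta>. \<alpha> \<in> SS \<Longrightarrow> \<beta> \<in> SS \<Longrightarrow>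
       f (qr_mult {1,2} trivial_quandle_op \<alpha> \<beta>) = qr_mult {1,2} trivial_quandle_op (f \<alpha>) (f \<beta>)"
    using f unfolding qr_ring_auts_def by auto
  have fext: "f \<in> extensional SS" and fbij: "bij_betw f SS SS" using fB by (auto simp: Bij_def)
  have fin: "f \<alpha> \<in> SS" if "\<alpha> \<in> SS" for \<alpha> using fbij that bij_betwE by blast
  have addv: "f (vec (p+p') (q+q')) z = f (vec p q) z + f (vec p' q') z" for p q p' q' z
    using fA[OF vec_in vec_in, of p q p' q'] unfolding add_vec by (simp add: qr_add_def)
  have l1: "f (vec p 0) z = p * f (vec 1 0) z" for p z
  proof (rule hom_int[where h="\<lambda>x. f (vec x 0) z"])
    fix x y show "f (vec (x+y) 0) z = f (vec x 0) z + f (vec y 0) z" using addv[of x y 0 0 z] by (simp only: add_0_left)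
  qed
  have l2: "f (vec 0 q) z = q * f (vec 0 1) z" for q z
  proof (rule hom_int[where h="\<lambda>x. f (vec 0 x) z"])
    fix x y show "f (vec 0 (x+y)) z = f (vec 0 x) z + f (vec 0 y) z" using addv[of 0 0 x y z] by (simp only: add_0_left)
  qed
  have lin: "f (vec p q) z = p * f (vec 1 0) z + q * f (vec 0 1) z" for p q z
    using addv[of p 0 0 q z] l1[of p z] l2[of q z] by (simp only: add_0_left add_0_right)
  define a where "a = f (vec 1 0) 1"
  define c where "c = f (vec 1 0) 2"
  define b where "b = f (vec 0 1) 1"
  define d where "d = f (vec 0 1) 2"
  have fm: "f = mat a b c d"
  proof (rule ext)
    fix \<alpha> :: "nat \<Rightarrow> int"
    show "f \<alpha> = mat a b c d \<alpha>"
    proof (cases "\<alpha> \<in> SS")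
      case True
      obtain p q where pq: "\<alpha> = vec p q" using S_eq[OF True] by blast
      have "f (vec p q) = vec (f (vec p q) 1) (f (vec p q) 2)" using S_eq[OF fin[OF vec_in]] .
      also have "\<dots> = vec (p * a + q * b) (p * c + q * d)"
        unfolding a_def b_def c_def d_def by (simp only: lin[of p q 1] lin[of p q 2])
      also have "\<dots> = mat a b c d (vec p q)" by (simp add: mat_vec algebra_simps)
      finally show ?thesis unfolding pq .
    next
      case False
      have "f \<alpha> = undefined" using extensional_arb[OF fext False] .
      moreover have "mat a b c d \<alpha> = undefined" using False by (simp add: mat_def)
      ultimately show ?thesis by simp
    qed
  qed
  have surj: "f ` SS = SS" using fbij by (simp add: bij_betw_def)
  have "vec 1 0 \<in> f ` SS" unfolding surj by (rule vec_in)
  then obtain \<alpha>0 where a0': "vec 1 0 = f \<alpha>0" "\<alpha>0 \<in> SS" by (rule imageE)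
  have a0: "\<alpha>0 \<in> SS" "f \<alpha>0 = vec 1 0" using a0' by simp_all
  have "vec 0 1 \<in> f ` SS" unfolding surj by (rule vec_in)
  then obtain \<gamma>0 where g0': "vec 0 1 = f \<gamma>0" "\<gamma>0 \<in> SS" by (rule imageE)
  have g0: "\<gamma>0 \<in> SS" "f \<gamma>0 = vec 0 1" using g0' by simp_all
  define p where "p = \<alpha>0 1"
  define q where "q = \<alpha>0 2"
  define r where "r = \<gamma>0 1"
  define t where "t = \<gamma>0 2"
  have av: "\<alpha>0 = vec p q" using S_eq[OF a0(1)] unfolding p_def q_def .
  have gv: "\<gamma>0 = vec r t" using S_eq[OF g0(1)] unfolding r_def t_def .
  have e1: "a*p+b*q = 1" "c*p+d*q = 0" using a0(2) unfolding av fm mat_vec vec_eq_iff by auto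
  have e2: "a*r+b*t = 0" "c*r+d*t = 1" using g0(2) unfolding gv fm mat_vec vec_eq_iff by auto
  have "f (qr_mult {1,2} trivial_quandle_op (vec p q) (vec 1 0)) =
     qr_mult {1,2} trivial_quandle_op (f (vec p q)) (f (vec 1 0))" by (rule fM[OF vec_in vec_in])
  then have "vec 1 0 = vec (a + c) 0" using a0(2) e1 unfolding av mult_vec fm mat_vec by simp
  then have ac: "a + c = 1" unfolding vec_eq_iff by simp
  have "f (qr_mult {1,2} trivial_quandle_op (vec p q) (vec 0 1)) =
     qr_mult {1,2} trivial_quandle_op (f (vec p q)) (f (vec 0 1))" by (rule fM[OF vec_in vec_in])
  then have "vec 1 0 = vec (b + d) 0" using a0(2) e1 unfolding av mult_vec fm mat_vec by simp
  then have bd: "b + d = 1" unfolding vec_eq_iff by simp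
  have "(a*d-b*c)*(p*t-q*r) = (a*p+b*q)*(c*r+d*t) - (a*r+b*t)*(c*p+d*q)"
    by (simp add: algebra_simps)
  then have "(a*d-b*c)*(p*t-q*r) = 1" using e1 e2 by simp
  then have "a*d-b*c = 1 \<or> a*d-b*c = -1" using zmult_eq_1_iff by blast
  then have "(a*d-b*c)*(a*d-b*c) = 1" by auto
  then show ?thesis using fm ac bd by blast
qed

lemma Z_carrier: "carrier Z_rtimes_Z2 = UNIV \<times> {0, 1}"
proof -
  have "{0..<int 2} = {0, 1 :: int}" by auto
  then show ?thesis
    by (simp add: Z_rtimes_Z2_def semidirect_product_def carrier_integer_mod_group integer_group_def)
qed

lemma Z_mult: "(n1, h1) \<otimes>\<^bsub>Z_rtimes_Z2\<^esub> (n2, h2) =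
   (n1 + (if h1 = 0 then n2 else - n2), (h1 + h2) mod 2)"
  by (simp add: Z_rtimes_Z2_def semidirect_product_def integer_group_def)

lemma Z_one: "\<one>\<^bsub>Z_rtimes_Z2\<^esub> = (0, 0)"
  by (simp add: Z_rtimes_Z2_def semidirect_product_def integer_group_def)

lemma group_Z: "group Z_rtimes_Z2"
proof (rule groupI)
  fix x y assume "x \<in> carrier Z_rtimes_Z2" "y \<in> carrier Z_rtimes_Z2"
  then show "x \<otimes>\<^bsub>Z_rtimes_Z2\<^esub> y \<in> carrier Z_rtimes_Z2"
    by (cases x, cases y) (auto simp: Z_carrier Z_mult)
next
  show "\<one>\<^bsub>Z_rtimes_Z2\<^esub> \<in> carrier Z_rtimes_Z2" by (simp add: Z_one Z_carrier)
next
  fix x y z assume "x \<in> carrier Z_rtimes_Z2" "y \<in> carrier Z_rtimes_Z2" "z \<in> carrier Z_rtimes_Z2"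
  then show "x \<otimes>\<^bsub>Z_rtimes_Z2\<^esub> y \<otimes>\<^bsub>Z_rtimes_Z2\<^esub> z =
      x \<otimes>\<^bsub>Z_rtimes_Z2\<^esub> (y \<otimes>\<^bsub>Z_rtimes_Z2\<^esub> z)"
    by (cases x, cases y, cases z) (auto simp: Z_carrier Z_mult)
next
  fix x assume "x \<in> carrier Z_rtimes_Z2"
  then show "\<one>\<^bsub>Z_rtimes_Z2\<^esub> \<otimes>\<^bsub>Z_rtimes_Z2\<^esub> x = x"
    by (cases x) (auto simp: Z_carrier Z_mult Z_one)
next
  fix x assume x: "x \<in> carrier Z_rtimes_Z2"
  obtain n h where nh: "x = (n, h)" by (cases x)
  have h: "h = 0 \<or> h = 1" using x nh by (simp add: Z_carrier)
  show "\<exists>y\<in>carrier Z_rtimes_Z2. y \<otimes>\<^bsub>Z_rtimes_Z2\<^esub> x = \<one>\<^bsub>Z_rtimes_Z2\<^esub>"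
  proof (rule bexI[where x="(if h = 0 then - n else n, h)"])
    show "(if h = 0 then - n else n, h) \<otimes>\<^bsub>Z_rtimes_Z2\<^esub> x = \<one>\<^bsub>Z_rtimes_Z2\<^esub>"
      using h unfolding nh Z_mult Z_one by auto
    show "(if h = 0 then - n else n, h) \<in> carrier Z_rtimes_Z2" using h by (simp add: Z_carrier)
  qed
qed

definition sg :: "int \<Rightarrow> int" where "sg h = (if h = 0 then 1 else -1)"

definition psi :: "int \<times> int \<Rightarrow> (nat \<Rightarrow> int) \<Rightarrow> (nat \<Rightarrow> int)" where
  "psi x = mat (fst x + sg (snd x)) (fst x) (1 - fst x - sg (snd x)) (1 - fst x)"

lemma sg_sq: "sg h * sg h = 1" by (simp add: sg_def)

lemma psi_aut: "psi x \<in> AUT"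
  unfolding psi_def
  by (rule mat_aut[where e="sg (snd x)"]) (auto simp: sg_sq algebra_simps)

lemma mat_cong: "a = a' \<Longrightarrow> b = b' \<Longrightarrow> c = c' \<Longrightarrow> d = d' \<Longrightarrow> mat a b c d = mat a' b' c' d'"
  by simp

lemma psi_mult:
  assumes "h1 = 0 \<or> h1 = 1" "h2 = 0 \<or> h2 = 1"
  shows "psi ((n1, h1) \<otimes>\<^bsub>Z_rtimes_Z2\<^esub> (n2, h2)) = compose SS (psi (n1, h1)) (psi (n2, h2))"
proof -
  have s: "sg ((h1 + h2) mod 2) = sg h1 * sg h2" "(if h1 = 0 then n2 else - n2) = sg h1 * n2"
    using assms by (auto simp: sg_def)
  show ?thesis
    unfolding Z_mult psi_def mat_compose fst_conv snd_conv s
    by (rule mat_cong) (simp_all add: algebra_simps sg_sq)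
qed

lemma AUT_mult: "f \<in> AUT \<Longrightarrow> g \<in> AUT \<Longrightarrow> f \<otimes>\<^bsub>qr_Aut {1, 2 :: nat} trivial_quandle_op\<^esub> g = compose SS f g"
  by (simp add: qr_Aut_def BijGroup_def qr_ring_auts_def)

lemma psi_iso: "psi \<in> iso Z_rtimes_Z2 (qr_Aut {1, 2 :: nat} trivial_quandle_op)"
proof (rule isoI)
  have carA: "carrier (qr_Aut {1, 2 :: nat} trivial_quandle_op) = AUT"
    by (simp add: qr_Aut_def)
  show "psi \<in> hom Z_rtimes_Z2 (qr_Aut {1, 2 :: nat} trivial_quandle_op)"
  proof (rule homI)
    fix x assume "x \<in> carrier Z_rtimes_Z2"
    show "psi x \<in> carrier (qr_Aut {1, 2 :: nat} trivial_quandle_op)" unfolding carA by (rule psi_aut)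
  next
    fix x y assume x: "x \<in> carrier Z_rtimes_Z2" and y: "y \<in> carrier Z_rtimes_Z2"
    obtain n1 h1 where 1: "x = (n1, h1)" by (cases x)
    obtain n2 h2 where 2: "y = (n2, h2)" by (cases y)
    have "h1 = 0 \<or> h1 = 1" "h2 = 0 \<or> h2 = 1" using x y 1 2 by (auto simp: Z_carrier)
    then show "psi (x \<otimes>\<^bsub>Z_rtimes_Z2\<^esub> y) = psi x \<otimes>\<^bsub>qr_Aut {1, 2 :: nat} trivial_quandle_op\<^esub> psi y"
      unfolding 1 2 AUT_mult[OF psi_aut psi_aut] by (rule psi_mult)
  qed
  show "bij_betw psi (carrier Z_rtimes_Z2) (carrier (qr_Aut {1, 2 :: nat} trivial_quandle_op))"
    unfolding carA bij_betw_def
  proof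
    show "inj_on psi (carrier Z_rtimes_Z2)"
    proof (rule inj_onI)
      fix x y assume x: "x \<in> carrier Z_rtimes_Z2" and y: "y \<in> carrier Z_rtimes_Z2" and e: "psi x = psi y"
      obtain n1 h1 where 1: "x = (n1, h1)" by (cases x)
      obtain n2 h2 where 2: "y = (n2, h2)" by (cases y)
      have h: "h1 = 0 \<or> h1 = 1" "h2 = 0 \<or> h2 = 1" using x y 1 2 by (auto simp: Z_carrier)
      have "n1 + sg h1 = n2 + sg h2" "n1 = n2" using mat_eq[OF e[unfolded psi_def]] 1 2 by auto
      then have "n1 = n2" "sg h1 = sg h2" by auto
      then show "x = y" using h 1 2 by (auto simp: sg_def)
    qed
    show "psi ` carrier Z_rtimes_Z2 = AUT"
    proof
      show "psi ` carrier Z_rtimes_Z2 \<subseteq> AUT" using psi_aut by blast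
      show "AUT \<subseteq> psi ` carrier Z_rtimes_Z2"
      proof
        fix f assume "f \<in> AUT"
        then obtain a b c d e where f: "f = mat a b c d" "a + c = 1" "b + d = 1" "a*d - b*c = e" "e*e = 1"
          using aut_char by blast
        have "e = 1 \<or> e = -1" using f(5) zmult_eq_1_iff by blast
        moreover have "e = a - b"
        proof -
          have cd: "c = 1 - a" "d = 1 - b" using f(2,3) by linarith+
          have "e = a*(1-b) - b*(1-a)" using f(4) unfolding cd by simp
          then show ?thesis by (simp add: algebra_simps)
        qed
        ultimately have ab: "a - b = 1 \<or> a - b = -1" by simp
        define x where "x = (b, if a - b = 1 then 0 else 1 :: int)"
        have "psi x = mat a b c d"
          unfolding psi_def x_def using ab f(2,3) by (intro mat_cong) (auto simp: sg_def)
        moreover have "x \<in> carrier Z_rtimes_Z2" by (simp add: x_def Z_carrier)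
        ultimately show "f \<in> psi ` carrier Z_rtimes_Z2" unfolding f(1) by (metis image_eqI)
      qed
    qed
  qed
qed

theorem theorem6p1:
  shows "qr_Aut {1, 2 :: nat} trivial_quandle_op \<cong> Z_rtimes_Z2"
  using group.iso_set_sym[OF group_Z psi_iso] by (rule is_isoI)

end
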